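(* Let $H$ be a separable infinite-dimensional complex Hilbert space and let $\mathcal{G}_{\infty}(H)$ be the set of all closed subspaces of $H$ whose dimension and codimension are both infinite. Let $f:\mathcal{G}_{\infty}(H)\to\mathcal{G}_{\infty}(H)$ be a map sending every pair of subspaces to an equivalent pair of subspaces. Let $L:H\to H$ be a linear or conjugate linear isometry and, for each $X\in\mathcal{G}_{\infty}(H)$, let $O(X)$ be a closed subspace orthogonal to the range of $L$ such that $f(X)=L(X)\oplus O(X)$ for all $X\in\mathcal{G}_{\infty}(H)$. If $O(X)=0$ for some $X\in\mathcal{G}_{\infty}(H)$, then $O(X)=0$ for all $X\in\mathcal{G}_{\infty}(H)$.
   Context: A linear (conjugate linear) isometry $H\to H$ is a norm-preserving linear (conjugate linear) map, not necessarily surjective. Two pairs of closed subspaces are equivalent if some linear isometry of $H$ transfers one pair (as an unordered pair) to the other; $f$ sends every pair to an equivalent pair if for all $X,Y$ there is a linear isometry $M$ with $\{f(X),f(Y)\}=\{M(X),M(Y)\}$. *)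

theory Defs
  imports "HOL-Analysis.Analysis"
begin

text \<open>Model of the separable infinite-dimensional complex Hilbert space H:
  the sequence space l2(N) of square-summable complex sequences.
  (Every separable infinite-dimensional complex Hilbert space is unitarily
  isomorphic to it, and the statement is invariant under such isomorphisms.)\<close>

type_synonym vec = "nat \<Rightarrow> complex"

definition l2 :: "vec set" where
  "l2 = {x. summable (\<lambda>n. (cmod (x n))^2)}"

definition vzero :: vec where "vzero = (\<lambda>n. 0)"

definition vadd :: "vec \<Rightarrow> vec \<Rightarrow> vec" where
  "vadd x y = (\<lambda>n. x n + y n)"

definition vdiff :: "vec \<Rightarrow> vec \<Rightarrow> vec" where
  "vdiff x y = (\<lambda>n. x n - y n)"

definition vscale :: "complex \<Rightarrow> vec \<Rightarrow> vec" where
  "vscale c x = (\<lambda>n. c * x n)"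

definition l2inner :: "vec \<Rightarrow> vec \<Rightarrow> complex" where
  "l2inner x y = (\<Sum>n. x n * cnj (y n))"

definition l2norm :: "vec \<Rightarrow> real" where
  "l2norm x = sqrt (\<Sum>n. (cmod (x n))^2)"

definition closed_subspace :: "vec set \<Rightarrow> bool" where
  "closed_subspace X \<longleftrightarrow>
     X \<subseteq> l2 \<and> vzero \<in> X \<and>
     (\<forall>x\<in>X. \<forall>y\<in>X. vadd x y \<in> X) \<and>
     (\<forall>c. \<forall>x\<in>X. vscale c x \<in> X) \<and>
     (\<forall>s x. (\<forall>k. s k \<in> X) \<longrightarrow> x \<in> l2 \<longrightarrow>
        (\<lambda>k. l2norm (vdiff (s k) x)) \<longlonglongrightarrow> 0 \<longrightarrow> x \<in> X)"

definition cspan_l2 :: "vec set \<Rightarrow> vec set" where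
  "cspan_l2 F = {(\<lambda>n. \<Sum>v\<in>G. c v * v n) | G c. finite G \<and> G \<subseteq> F}"

definition fin_dim :: "vec set \<Rightarrow> bool" where
  "fin_dim X \<longleftrightarrow> (\<exists>F. finite F \<and> F \<subseteq> l2 \<and> X \<subseteq> cspan_l2 F)"

definition orth_compl :: "vec set \<Rightarrow> vec set" where
  "orth_compl X = {y \<in> l2. \<forall>x\<in>X. l2inner x y = 0}"

text \<open>G_infinity(H): closed subspaces of infinite dimension and infinite
  codimension (codimension of a closed subspace = dimension of its orthogonal
  complement).\<close>
definition Ginf :: "vec set set" where
  "Ginf = {X. closed_subspace X \<and> \<not> fin_dim X \<and> \<not> fin_dim (orth_compl X)}"

definition isometry_on_l2 :: "(vec \<Rightarrow> vec) \<Rightarrow> bool" where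
  "isometry_on_l2 M \<longleftrightarrow> (\<forall>x\<in>l2. M x \<in> l2 \<and> l2norm (M x) = l2norm x)"

definition lin_isometry :: "(vec \<Rightarrow> vec) \<Rightarrow> bool" where
  "lin_isometry M \<longleftrightarrow> isometry_on_l2 M \<and>
     (\<forall>x\<in>l2. \<forall>y\<in>l2. M (vadd x y) = vadd (M x) (M y)) \<and>
     (\<forall>c. \<forall>x\<in>l2. M (vscale c x) = vscale c (M x))"

definition conj_lin_isometry :: "(vec \<Rightarrow> vec) \<Rightarrow> bool" where
  "conj_lin_isometry M \<longleftrightarrow> isometry_on_l2 M \<and>
     (\<forall>x\<in>l2. \<forall>y\<in>l2. M (vadd x y) = vadd (M x) (M y)) \<and>
     (\<forall>c. \<forall>x\<in>l2. M (vscale c x) = vscale (cnj c) (M x))"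

text \<open>Pairs {X,Y} and {X',Y'} are equivalent if a linear isometry transfers one
  (as an unordered pair) to the other.\<close>
definition sends_pairs_to_equiv :: "(vec set \<Rightarrow> vec set) \<Rightarrow> bool" where
  "sends_pairs_to_equiv f \<longleftrightarrow>
     (\<forall>X\<in>Ginf. \<forall>Y\<in>Ginf. \<exists>M. lin_isometry M \<and> {f X, f Y} = {M ` X, M ` Y})"

definition set_sum :: "vec set \<Rightarrow> vec set \<Rightarrow> vec set" where
  "set_sum A B = {vadd a b | a b. a \<in> A \<and> b \<in> B}"

end

theory Submission imports Defs "HOL-Library.Function_Algebras" begin

definition nsq :: "vec \<Rightarrow> real" where "nsq x = (\<Sum>n. (cmod (x n))^2)"

lemma l2_iff: "x \<in> l2 \<longleftrightarrow> summable (\<lambda>n. (cmod (x n))^2)" by (simp add: l2_def)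

lemma summable_prod:
  assumes "x \<in> l2" "y \<in> l2" shows "summable (\<lambda>n. x n * cnj (y n))"
proof (rule summable_norm_cancel)
  have "summable (\<lambda>n. (cmod (x n))^2 + (cmod (y n))^2)"
    using assms by (intro summable_add) (auto simp: l2_iff)
  moreover have "norm (norm (x n * cnj (y n))) \<le> (cmod (x n))^2 + (cmod (y n))^2" for n
  proof -
    have "2 * (cmod (x n) * cmod (y n)) \<le> (cmod (x n))^2 + (cmod (y n))^2"
      using sum_squares_bound[of "cmod (x n)" "cmod (y n)"] by (simp add: power2_eq_square)
    moreover have "0 \<le> cmod (x n) * cmod (y n)" by simp
    moreover have "norm (norm (x n * cnj (y n))) = cmod (x n) * cmod (y n)" by (simp add: norm_mult)
    ultimately show ?thesis by linarith
  qed
  ultimately show "summable (\<lambda>n. norm (x n * cnj (y n)))"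
    by (rule summable_comparison_test'[where N=0])
qed

lemma l2_vzero[simp]: "vzero \<in> l2" by (simp add: l2_iff vzero_def)

lemma l2_vadd[simp]: assumes "x \<in> l2" "y \<in> l2" shows "vadd x y \<in> l2"
proof -
  have "summable (\<lambda>n. 2*(cmod (x n))^2 + 2*(cmod (y n))^2)"
    using assms by (intro summable_add summable_mult) (auto simp: l2_iff)
  moreover have "norm ((cmod (x n + y n))^2) \<le> 2*(cmod (x n))^2 + 2*(cmod (y n))^2" for n
  proof -
    have "cmod (x n + y n) \<le> cmod (x n) + cmod (y n)" by (rule norm_triangle_ineq)
    hence "(cmod (x n + y n))^2 \<le> (cmod (x n) + cmod (y n))^2" by (simp add: power_mono)
    also have "\<dots> \<le> 2*(cmod (x n))^2 + 2*(cmod (y n))^2"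
      using sum_squares_bound[of "cmod (x n)" "cmod (y n)"] by (simp add: power2_eq_square algebra_simps)
    finally show ?thesis by simp
  qed
  ultimately show ?thesis unfolding l2_iff vadd_def
    by (rule summable_comparison_test'[where N=0])
qed

lemma l2_vscale[simp]: assumes "x \<in> l2" shows "vscale c x \<in> l2"
proof -
  have "summable (\<lambda>n. (cmod c)^2 * (cmod (x n))^2)"
    using assms by (intro summable_mult) (auto simp: l2_iff)
  thus ?thesis by (simp add: l2_iff vscale_def norm_mult power_mult_distrib)
qed

lemma vdiff_eq: "vdiff x y = vadd x (vscale (-1) y)"
  by (simp add: vdiff_def vadd_def vscale_def)

lemma l2_vdiff[simp]: assumes "x \<in> l2" "y \<in> l2" shows "vdiff x y \<in> l2"
  using assms by (simp add: vdiff_eq)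

lemma inner_add_left: assumes "x \<in> l2" "y \<in> l2" "z \<in> l2"
  shows "l2inner (vadd x y) z = l2inner x z + l2inner y z"
proof -
  have "l2inner (vadd x y) z = (\<Sum>n. x n * cnj (z n) + y n * cnj (z n))"
    by (simp add: l2inner_def vadd_def distrib_right)
  also have "\<dots> = l2inner x z + l2inner y z"
    unfolding l2inner_def using summable_prod assms by (intro suminf_add[symmetric]) auto
  finally show ?thesis .
qed

lemma inner_scale_left: assumes "x \<in> l2" "z \<in> l2"
  shows "l2inner (vscale c x) z = c * l2inner x z"
proof -
  have "l2inner (vscale c x) z = (\<Sum>n. c * (x n * cnj (z n)))"
    by (simp add: l2inner_def vscale_def mult.assoc)
  also have "\<dots> = c * l2inner x z"
    unfolding l2inner_def using summable_prod assms by (intro suminf_mult) auto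
  finally show ?thesis .
qed

lemma inner_commute: assumes "x \<in> l2" "y \<in> l2"
  shows "l2inner y x = cnj (l2inner x y)"
proof -
  have "(\<lambda>n. x n * cnj (y n)) sums l2inner x y"
    using summable_prod[OF assms] by (simp add: l2inner_def summable_sums)
  hence "(\<lambda>n. cnj (x n * cnj (y n))) sums cnj (l2inner x y)" by (rule sums_cnj[THEN iffD2])
  hence "(\<lambda>n. y n * cnj (x n)) sums cnj (l2inner x y)" by (simp add: ac_simps)
  thus ?thesis by (simp add: l2inner_def sums_iff)
qed

lemma inner_add_right: assumes "x \<in> l2" "y \<in> l2" "z \<in> l2"
  shows "l2inner z (vadd x y) = l2inner z x + l2inner z y"
  using assms by (simp add: inner_commute[of _ z] inner_add_left)

lemma inner_scale_right: assumes "x \<in> l2" "z \<in> l2"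
  shows "l2inner z (vscale c x) = cnj c * l2inner z x"
  using assms by (simp add: inner_commute[of _ z] inner_scale_left)

lemma inner_diff_left: assumes "x \<in> l2" "y \<in> l2" "z \<in> l2"
  shows "l2inner (vdiff x y) z = l2inner x z - l2inner y z"
  using assms by (simp add: vdiff_eq inner_add_left inner_scale_left)

lemma inner_diff_right: assumes "x \<in> l2" "y \<in> l2" "z \<in> l2"
  shows "l2inner z (vdiff x y) = l2inner z x - l2inner z y"
  using assms by (simp add: vdiff_eq inner_add_right inner_scale_right)

lemma inner_self: assumes "x \<in> l2" shows "l2inner x x = complex_of_real (nsq x)"
proof -
  have "l2inner x x = (\<Sum>n. complex_of_real ((cmod (x n))^2))"
    unfolding l2inner_def by (simp only: complex_norm_square)
  also have "\<dots> = complex_of_real (nsq x)"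
    unfolding nsq_def using assms by (intro suminf_of_real[symmetric]) (simp add: l2_iff)
  finally show ?thesis .
qed

lemma nsq_nonneg: "x \<in> l2 \<Longrightarrow> 0 \<le> nsq x"
  unfolding nsq_def by (intro suminf_nonneg) (auto simp: l2_iff)

lemma l2norm_sq: "x \<in> l2 \<Longrightarrow> (l2norm x)^2 = nsq x"
  using nsq_nonneg by (simp add: l2norm_def nsq_def[symmetric])

lemma nsq_zero: assumes "x \<in> l2" "nsq x = 0" shows "x = vzero"
proof -
  have "\<forall>n. (cmod (x n))^2 = 0"
    using assms suminf_eq_zero_iff[of "\<lambda>n. (cmod (x n))^2"] by (simp add: l2_iff nsq_def)
  thus ?thesis by (auto simp: vzero_def)
qed

lemma inner_self_zero: "x \<in> l2 \<Longrightarrow> l2inner x x = 0 \<Longrightarrow> x = vzero"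
  by (simp add: inner_self nsq_zero)

lemma inner_zero_left[simp]: "l2inner vzero y = 0" by (simp add: l2inner_def vzero_def)
lemma inner_zero_right[simp]: "l2inner y vzero = 0" by (simp add: l2inner_def vzero_def)

lemma inner_cs_sq: assumes "x \<in> l2" "y \<in> l2"
  shows "(cmod (l2inner x y))^2 \<le> nsq x * nsq y"
proof (cases "nsq y = 0")
  case True
  then show ?thesis using nsq_zero[OF assms(2)] by simp
next
  case False
  define p where "p = l2inner x y"
  define ny where "ny = nsq y"
  define t where "t = p / complex_of_real ny"
  have ny: "ny \<noteq> 0" "ny > 0" using False nsq_nonneg[OF assms(2)] by (auto simp: ny_def)
  define z where "z = vdiff x (vscale t y)"
  have zl: "z \<in> l2" using assms by (simp add: z_def)
  have "l2inner z z = l2inner x x - cnj t * p - t * cnj p + t * cnj t * l2inner y y"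
    using assms unfolding z_def p_def
    by (simp add: inner_diff_left inner_diff_right inner_scale_left inner_scale_right
        inner_commute[of x y] algebra_simps)
  also have "\<dots> = complex_of_real (nsq x) - p * cnj p / complex_of_real ny"
    using ny assms by (simp add: inner_self t_def ny_def[symmetric] field_simps)
  also have "\<dots> = complex_of_real (nsq x - (cmod p)^2 / ny)"
    by (simp add: complex_norm_square[symmetric])
  finally have "complex_of_real (nsq z) = complex_of_real (nsq x - (cmod p)^2 / ny)"
    by (simp only: inner_self[OF zl])
  hence "nsq z = nsq x - (cmod p)^2 / ny" by (simp only: of_real_eq_iff)
  moreover have "0 \<le> nsq z" using zl by (rule nsq_nonneg)
  ultimately have "(cmod p)^2 / ny \<le> nsq x" by simp
  thus ?thesis using ny by (simp add: p_def ny_def[symmetric] field_simps)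
qed

lemma inner_cs: assumes "x \<in> l2" "y \<in> l2"
  shows "cmod (l2inner x y) \<le> l2norm x * l2norm y"
proof (rule power2_le_imp_le)
  show "(cmod (l2inner x y))^2 \<le> (l2norm x * l2norm y)^2"
    using inner_cs_sq[OF assms] assms by (simp add: power_mult_distrib l2norm_sq)
  show "0 \<le> l2norm x * l2norm y"
    using assms nsq_nonneg by (simp add: l2norm_def nsq_def[symmetric])
qed

lemma orth_compl_l2: "orth_compl E \<subseteq> l2" by (auto simp: orth_compl_def)

lemma closed_orth_compl: assumes "E \<subseteq> l2" shows "closed_subspace (orth_compl E)"
  unfolding closed_subspace_def
proof (intro conjI ballI allI impI)
  show "orth_compl E \<subseteq> l2" by (rule orth_compl_l2)
  show "vzero \<in> orth_compl E" by (simp add: orth_compl_def)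
  fix x y assume "x \<in> orth_compl E" "y \<in> orth_compl E"
  thus "vadd x y \<in> orth_compl E" using assms
    by (auto simp: orth_compl_def inner_add_right subset_iff)
next
  fix c x assume "x \<in> orth_compl E"
  thus "vscale c x \<in> orth_compl E" using assms
    by (auto simp: orth_compl_def inner_scale_right subset_iff)
next
  fix s x assume s: "\<forall>k. s k \<in> orth_compl E" and x: "x \<in> l2"
    and lim: "(\<lambda>k. l2norm (vdiff (s k) x)) \<longlonglongrightarrow> 0"
  have "l2inner e x = 0" if e: "e \<in> E" for e
  proof -
    have el: "e \<in> l2" using e assms by auto
    have "cmod (l2inner e x) \<le> l2norm e * l2norm (vdiff (s k) x)" for k
    proof -
      have sk: "s k \<in> l2" "l2inner e (s k) = 0" using s e by (auto simp: orth_compl_def)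
      have "l2inner e x = - l2inner e (vdiff (s k) x)"
        using sk el x by (simp add: inner_diff_right)
      hence "cmod (l2inner e x) = cmod (l2inner e (vdiff (s k) x))" by simp
      also have "\<dots> \<le> l2norm e * l2norm (vdiff (s k) x)" using sk el x by (intro inner_cs) auto
      finally show ?thesis .
    qed
    moreover have lim2: "(\<lambda>k. l2norm e * l2norm (vdiff (s k) x)) \<longlonglongrightarrow> l2norm e * 0"
      by (intro tendsto_mult_left lim)
    ultimately have "cmod (l2inner e x) \<le> l2norm e * 0"
      by (intro LIMSEQ_le_const[OF lim2]) auto
    thus ?thesis by simp
  qed
  thus "x \<in> orth_compl E" using x by (auto simp: orth_compl_def)
qed

lemma sub_NN: assumes "E \<subseteq> l2" shows "E \<subseteq> orth_compl (orth_compl E)"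
proof
  fix e assume e: "e \<in> E"
  have "l2inner z e = 0" if "z \<in> orth_compl E" for z
    using that e assms inner_commute[of e z] by (auto simp: orth_compl_def)
  thus "e \<in> orth_compl (orth_compl E)" using e assms by (auto simp: orth_compl_def)
qed

lemma N_anti: "A \<subseteq> B \<Longrightarrow> orth_compl B \<subseteq> orth_compl A"
  by (auto simp: orth_compl_def)

lemma NNN: assumes "E \<subseteq> l2" shows "orth_compl (orth_compl (orth_compl E)) = orth_compl E"
  using sub_NN[OF assms] sub_NN[OF orth_compl_l2[of E]] N_anti by blast

lemma N_NN_zero: assumes "v \<in> orth_compl E" "v \<in> orth_compl (orth_compl E)" shows "v = vzero"
  using assms by (intro inner_self_zero) (auto simp: orth_compl_def)

lemma nsq_add: assumes "x \<in> l2" "y \<in> l2"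
  shows "nsq (vadd x y) = nsq x + nsq y + 2 * Re (l2inner x y)"
proof -
  have "complex_of_real (nsq (vadd x y)) = l2inner (vadd x y) (vadd x y)"
    using assms by (simp add: inner_self)
  also have "\<dots> = l2inner x x + l2inner y y + (l2inner x y + cnj (l2inner x y))"
    using assms by (simp add: inner_add_left inner_add_right inner_commute[of x y])
  also have "\<dots> = complex_of_real (nsq x + nsq y + 2 * Re (l2inner x y))"
    using assms by (simp add: inner_self complex_add_cnj)
  finally show ?thesis by (simp only: of_real_eq_iff)
qed

definition isoL :: "(vec \<Rightarrow> vec) \<Rightarrow> bool" where
  "isoL T \<longleftrightarrow> isometry_on_l2 T \<and> (\<forall>x\<in>l2. \<forall>y\<in>l2. T (vadd x y) = vadd (T x) (T y)) \<and>
     (\<exists>c. (c = \<i> \<or> c = - \<i>) \<and> (\<forall>x\<in>l2. T (vscale \<i> x) = vscale c (T x)))"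

lemma lin_isoL: "lin_isometry T \<Longrightarrow> isoL T"
  unfolding lin_isometry_def isoL_def by blast

lemma conj_isoL: "conj_lin_isometry T \<Longrightarrow> isoL T"
  unfolding conj_lin_isometry_def isoL_def by force

lemma isoL_l2: "isoL T \<Longrightarrow> x \<in> l2 \<Longrightarrow> T x \<in> l2"
  by (simp add: isoL_def isometry_on_l2_def)

lemma isoL_nsq: assumes "isoL T" "x \<in> l2" shows "nsq (T x) = nsq x"
proof -
  have "l2norm (T x) = l2norm x" using assms by (simp add: isoL_def isometry_on_l2_def)
  hence "(l2norm (T x))^2 = (l2norm x)^2" by simp
  thus ?thesis using assms isoL_l2 by (simp add: l2norm_sq)
qed

lemma isoL_zero: assumes "isoL T" shows "T vzero = vzero"
proof -
  have "nsq (T vzero) = 0" using isoL_nsq[OF assms l2_vzero] by (simp add: nsq_def vzero_def)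
  thus ?thesis using nsq_zero isoL_l2[OF assms] by simp
qed

lemma isoL_inj0: assumes "isoL T" "x \<in> l2" "T x = vzero" shows "x = vzero"
proof -
  have "nsq x = 0" using isoL_nsq[OF assms(1,2)] assms(3) by (simp add: nsq_def vzero_def)
  thus ?thesis using nsq_zero assms(2) by simp
qed

lemma isoL_re: assumes "isoL T" "x \<in> l2" "y \<in> l2"
  shows "Re (l2inner (T x) (T y)) = Re (l2inner x y)"
proof -
  have add: "T (vadd x y) = vadd (T x) (T y)" using assms by (simp add: isoL_def)
  have "nsq (T (vadd x y)) = nsq (vadd x y)" using assms by (simp add: isoL_nsq)
  thus ?thesis using assms add isoL_l2[OF assms(1)]
    by (simp add: nsq_add isoL_nsq)
qed

lemma complex_zero_iff_re_im: "z = 0 \<longleftrightarrow> Re z = 0 \<and> Re (- \<i> * z) = 0"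
  by (simp add: complex_eq_iff)

lemma isoL_orth: assumes "isoL T" "x \<in> l2" "y \<in> l2"
  shows "l2inner (T x) (T y) = 0 \<longleftrightarrow> l2inner x y = 0"
proof -
  obtain c where c: "c = \<i> \<or> c = - \<i>" "\<forall>x\<in>l2. T (vscale \<i> x) = vscale c (T x)"
    using assms(1) unfolding isoL_def by blast
  have "Re (l2inner (T x) (T (vscale \<i> y))) = Re (l2inner x (vscale \<i> y))"
    using assms by (simp add: isoL_re)
  hence im: "Re (cnj c * l2inner (T x) (T y)) = Re (- \<i> * l2inner x y)"
    using assms c(2) isoL_l2[OF assms(1)] by (simp add: inner_scale_right)
  have re: "Re (l2inner (T x) (T y)) = Re (l2inner x y)" using assms by (simp add: isoL_re)
  show ?thesis
    using c(1) im re by (auto simp: complex_eq_iff)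
qed

lemma set_sum_zero: "set_sum S {vzero} = S"
  by (auto simp: set_sum_def vadd_def vzero_def)

lemma cs_l2: "closed_subspace X \<Longrightarrow> X \<subseteq> l2" by (simp add: closed_subspace_def)
lemma cs_zero: "closed_subspace X \<Longrightarrow> vzero \<in> X" by (simp add: closed_subspace_def)

lemma ruleA:
  assumes f_pairs: "sends_pairs_to_equiv f"
    and L: "isoL L"
    and O_sub: "\<forall>X\<in>Ginf. closed_subspace (Oc X) \<and> Oc X \<subseteq> orth_compl (L ` l2)"
    and f_decomp: "\<forall>X\<in>Ginf. f X = set_sum (L ` X) (Oc X)"
    and A: "A \<in> Ginf" "Oc A = {vzero}"
    and B: "B \<in> Ginf" "B \<inter> orth_compl A \<subseteq> {vzero}"
  shows "Oc B = {vzero}"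
proof -
  have csA: "closed_subspace A" and csB: "closed_subspace B" using A B by (auto simp: Ginf_def)
  have Al: "A \<subseteq> l2" and Bl: "B \<subseteq> l2" using csA csB cs_l2 by auto
  have OB: "closed_subspace (Oc B)" "Oc B \<subseteq> orth_compl (L ` l2)" using O_sub B by auto
  have OBl: "Oc B \<subseteq> l2" using OB cs_l2 by auto
  have fA: "f A = L ` A" using f_decomp A by (simp add: set_sum_zero)
  have fB: "f B = set_sum (L ` B) (Oc B)" using f_decomp B by simp
  from f_pairs[unfolded sends_pairs_to_equiv_def, rule_format, OF A(1) B(1)]
  obtain M where M: "lin_isometry M" "{f A, f B} = {M ` A, M ` B}" by blast
  have iM: "isoL M" using M(1) by (rule lin_isoL)
  have perp: "l2inner (L z) ov = 0" if "ov \<in> Oc B" "z \<in> l2" for ov z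
    using that OB(2) by (auto simp: orth_compl_def)
  have NA: "b \<in> B \<Longrightarrow> b \<in> orth_compl A \<Longrightarrow> b = vzero" for b using B(2) by blast
  have "ov = vzero" if ov: "ov \<in> Oc B" for ov
  proof -
    have ol: "ov \<in> l2" using ov OBl by auto
    have e1: "ov = vadd (L vzero) ov" using isoL_zero[OF L] by (simp add: vadd_def vzero_def)
    have e2: "L vzero \<in> L ` B" using cs_zero[OF csB] by simp
    have "ov \<in> f B" unfolding fB set_sum_def using e1 e2 ov by blast
    from M(2) consider "f A = M ` A" "f B = M ` B" | "f A = M ` B" "f B = M ` A"
      by (auto simp: doubleton_eq_iff)
    then show ?thesis
    proof cases
      case 1
      then obtain b where b: "b \<in> B" "ov = M b" using \<open>ov \<in> f B\<close> by auto
      have "l2inner a b = 0" if a: "a \<in> A" for a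
      proof -
        have "M a \<in> L ` A" using 1 fA a by auto
        then obtain a' where a': "a' \<in> A" "M a = L a'" by auto
        have "l2inner (M a) (M b) = 0" using perp[OF ov, of a'] a' Al b by auto
        thus ?thesis using isoL_orth[OF iM, of a b] a b Al Bl by auto
      qed
      hence "b \<in> orth_compl A" using b Bl by (auto simp: orth_compl_def)
      hence "b = vzero" using NA b by auto
      thus ?thesis using b isoL_zero[OF iM] by simp
    next
      case 2
      then obtain a where a: "a \<in> A" "ov = M a" using \<open>ov \<in> f B\<close> by auto
      have aNB: "l2inner b a = 0" if b: "b \<in> B" for b
      proof -
        have "M b \<in> L ` A" using 2 fA b by auto
        then obtain a2 where a2: "a2 \<in> A" "M b = L a2" by auto
        have "l2inner (M b) (M a) = 0" using perp[OF ov, of a2] a2 Al a by auto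
        thus ?thesis using isoL_orth[OF iM, of b a] a b Al Bl by auto
      qed
      have "L a \<in> M ` B" using 2 fA a by auto
      then obtain b where b: "b \<in> B" "L a = M b" by auto
      have "l2inner a3 b = 0" if a3: "a3 \<in> A" for a3
      proof -
        have "M a3 \<in> f B" using 2 a3 by auto
        then obtain b2 o2 where bo: "b2 \<in> B" "o2 \<in> Oc B" "M a3 = vadd (L b2) o2"
          unfolding fB set_sum_def by auto
        have o2l: "o2 \<in> l2" using bo OBl by auto
        have La: "L a \<in> l2" "L b2 \<in> l2" using isoL_l2[OF L] a bo Al Bl by auto
        have "l2inner (L b2) (L a) = 0" using isoL_orth[OF L, of b2 a] aNB[OF bo(1)] a bo Al Bl by auto
        moreover have "l2inner o2 (L a) = 0"
          using inner_commute[OF La(1) o2l] perp[OF bo(2), of a] a Al by auto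
        ultimately have "l2inner (M a3) (M b) = 0"
          using bo(3) b(2)[symmetric] La o2l by (simp add: inner_add_left)
        thus ?thesis using isoL_orth[OF iM, of a3 b] a3 b Al Bl by auto
      qed
      hence "b \<in> orth_compl A" using b Bl by (auto simp: orth_compl_def)
      hence "b = vzero" using NA b by auto
      hence "L a = vzero" using b isoL_zero[OF iM] by simp
      hence "a = vzero" using isoL_inj0[OF L] a Al by auto
      thus ?thesis using a isoL_zero[OF iM] by simp
    qed
  qed
  thus ?thesis using cs_zero[OF OB(1)] by auto
qed

lemma bprime:
  assumes "A \<subseteq> l2" "W \<subseteq> l2" "\<forall>w\<in>W. \<exists>y\<in>A. vdiff y w \<in> orth_compl W"
  shows "orth_compl (orth_compl W) \<inter> orth_compl A \<subseteq> {vzero}"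
proof
  fix v assume v: "v \<in> orth_compl (orth_compl W) \<inter> orth_compl A"
  have vl: "v \<in> l2" using v by (auto simp: orth_compl_def)
  have "l2inner w v = 0" if w: "w \<in> W" for w
  proof -
    obtain y where y: "y \<in> A" "vdiff y w \<in> orth_compl W" using assms(3) w by blast
    have "l2inner y v = 0" using v y by (auto simp: orth_compl_def)
    moreover have "l2inner (vdiff y w) v = 0" using v y by (auto simp: orth_compl_def)
    moreover have "y \<in> l2" "w \<in> l2" using y w assms by auto
    ultimately show ?thesis using inner_diff_left[of y w v] vl by simp
  qed
  hence "v \<in> orth_compl W" using vl by (auto simp: orth_compl_def)
  thus "v \<in> {vzero}" using v N_NN_zero by blast
qed

interpretation Vs: vector_space vscale
  by unfold_locales (auto simp: vscale_def fun_eq_iff algebra_simps)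

lemma plus_vadd: "x + y = vadd x y" by (simp add: vadd_def fun_eq_iff)

lemma sum_fun_apply: "(sum g T) n = sum (\<lambda>a. (g a :: vec) n) T"
  by (induction T rule: infinite_finite_induct) auto

lemma cspan_sub_span: "cspan_l2 F \<subseteq> Vs.span F"
  unfolding cspan_l2_def Vs.span_explicit
  by (auto simp: fun_eq_iff sum_fun_apply vscale_def)

lemma sum_l2: "finite T \<Longrightarrow> T \<subseteq> l2 \<Longrightarrow> (\<Sum>a\<in>T. vscale (u a) a) \<in> l2"
proof (induction T rule: finite_induct)
  case empty then show ?case by (simp add: zero_fun_def vzero_def[symmetric])
next
  case (insert x F) then show ?case by (simp add: plus_vadd)
qed

lemma inner_sum_left: "finite T \<Longrightarrow> T \<subseteq> l2 \<Longrightarrow> z \<in> l2 \<Longrightarrow>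
   l2inner (\<Sum>a\<in>T. vscale (u a) a) z = (\<Sum>a\<in>T. u a * l2inner a z)"
proof (induction T rule: finite_induct)
  case empty then show ?case by (simp add: zero_fun_def vzero_def[symmetric])
next
  case (insert x F) then show ?case
    by (simp add: plus_vadd inner_add_left sum_l2 inner_scale_left)
qed

lemma orth_family_not_fin_dim:
  fixes g :: "nat \<Rightarrow> vec"
  assumes gl: "\<forall>k. g k \<in> l2" and gS: "\<forall>k. g k \<in> S"
    and orth: "\<forall>j k. j \<noteq> k \<longrightarrow> l2inner (g j) (g k) = 0"
    and nz: "\<forall>k. g k \<noteq> vzero"
  shows "\<not> fin_dim S"
proof
  assume "fin_dim S"
  then obtain F where F: "finite F" "S \<subseteq> Vs.span F"
    unfolding fin_dim_def using cspan_sub_span by blast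
  have self: "l2inner (g k) (g k) \<noteq> 0" for k using nz gl inner_self_zero by blast
  have inj: "inj g"
  proof (rule injI)
    fix j k assume "g j = g k"
    thus "j = k" using orth self by metis
  qed
  define G where "G = g ` {..card F}"
  have cardG: "card G = Suc (card F)" unfolding G_def
    using inj by (simp add: card_image inj_on_subset[OF inj])
  have Gl: "G \<subseteq> l2" using gl by (auto simp: G_def)
  have "Vs.independent G"
    unfolding Vs.independent_explicit_finite_subsets
  proof (intro allI impI ballI)
    fix T u v assume T: "T \<subseteq> G" "finite T" and s0: "(\<Sum>v\<in>T. vscale (u v) v) = 0" and v: "v \<in> T"
    have Tl: "T \<subseteq> l2" using T Gl by auto
    have "l2inner (\<Sum>v\<in>T. vscale (u v) v) v = (\<Sum>a\<in>T. u a * l2inner a v)"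
      using inner_sum_left[OF T(2) Tl] v Tl by auto
    also have "\<dots> = u v * l2inner v v"
    proof (rule sum.remove[OF T(2) v, THEN trans])
      have "(\<Sum>a\<in>T - {v}. u a * l2inner a v) = 0"
      proof (rule sum.neutral, rule ballI)
        fix a assume a: "a \<in> T - {v}"
        obtain j where j: "a = g j" using a T by (auto simp: G_def)
        obtain k where k: "v = g k" using v T by (auto simp: G_def)
        have "j \<noteq> k" using a j k by auto
        thus "u a * l2inner a v = 0" using orth j k by simp
      qed
      thus "u v * l2inner v v + (\<Sum>a\<in>T - {v}. u a * l2inner a v) = u v * l2inner v v" by simp
    qed
    finally have "u v * l2inner v v = 0" using s0 by (simp add: zero_fun_def vzero_def[symmetric])
    moreover obtain k where "v = g k" using v T by (auto simp: G_def)
    ultimately show "u v = 0" using self by auto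
  qed
  moreover have "G \<subseteq> Vs.span F" using F gS by (auto simp: G_def)
  ultimately have "card G \<le> card F" using Vs.independent_span_bound[OF F(1)] by blast
  thus False using cardG by simp
qed


lemma span_sub_cspan: "Vs.span F \<subseteq> cspan_l2 F"
  unfolding cspan_l2_def Vs.span_explicit
  by (auto simp: fun_eq_iff sum_fun_apply vscale_def)

lemma fin_dim_span: "fin_dim S \<longleftrightarrow> (\<exists>F. finite F \<and> F \<subseteq> l2 \<and> S \<subseteq> Vs.span F)"
proof
  assume "fin_dim S"
  then obtain F where "finite F" "F \<subseteq> l2" "S \<subseteq> cspan_l2 F" unfolding fin_dim_def by blast
  thus "\<exists>F. finite F \<and> F \<subseteq> l2 \<and> S \<subseteq> Vs.span F" using cspan_sub_span[of F] by blast
next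
  assume "\<exists>F. finite F \<and> F \<subseteq> l2 \<and> S \<subseteq> Vs.span F"
  then obtain F where "finite F" "F \<subseteq> l2" "S \<subseteq> Vs.span F" by blast
  thus "fin_dim S" unfolding fin_dim_def using span_sub_cspan[of F] by blast
qed

definition lsub :: "vec set \<Rightarrow> bool" where
  "lsub Y \<longleftrightarrow> Y \<subseteq> l2 \<and> vzero \<in> Y \<and> (\<forall>x\<in>Y. \<forall>y\<in>Y. vadd x y \<in> Y) \<and> (\<forall>c. \<forall>x\<in>Y. vscale c x \<in> Y)"

lemma cs_lsub: "closed_subspace X \<Longrightarrow> lsub X"
  by (simp add: closed_subspace_def lsub_def)

lemma lsub_diff: "lsub Y \<Longrightarrow> x \<in> Y \<Longrightarrow> y \<in> Y \<Longrightarrow> vdiff x y \<in> Y"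
  unfolding lsub_def vdiff_eq by blast

lemma lsub_cut: assumes "lsub Y" "f \<in> l2" shows "lsub {y\<in>Y. l2inner f y = 0}"
  using assms unfolding lsub_def
  by (auto simp: inner_add_right inner_scale_right subset_iff)

lemma cut_not_fin_dim:
  assumes Y: "lsub Y" "\<not> fin_dim Y" and f: "f \<in> l2"
  shows "\<not> fin_dim {y\<in>Y. l2inner f y = 0}"
proof
  assume "fin_dim {y\<in>Y. l2inner f y = 0}"
  then obtain G where G: "finite G" "G \<subseteq> l2" "{y\<in>Y. l2inner f y = 0} \<subseteq> Vs.span G"
    unfolding fin_dim_span by blast
  have Yl: "Y \<subseteq> l2" using Y by (simp add: lsub_def)
  show False
  proof (cases "\<forall>y\<in>Y. l2inner f y = 0")
    case True
    then have "fin_dim Y" unfolding fin_dim_span using G by blast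
    then show False using Y by simp
  next
    case False
    then obtain w where w: "w \<in> Y" "l2inner f w \<noteq> 0" by blast
    have "Y \<subseteq> Vs.span (insert w G)"
    proof
      fix y assume y: "y \<in> Y"
      define c where "c = cnj (l2inner f y / l2inner f w)"
      define y' where "y' = vdiff y (vscale c w)"
      have y'Y: "y' \<in> Y" using Y y w unfolding y'_def by (intro lsub_diff) (auto simp: lsub_def)
      have "l2inner f y' = l2inner f y - cnj c * l2inner f w"
        using y w Yl f by (simp add: y'_def inner_diff_right inner_scale_right subset_iff)
      also have "\<dots> = 0" using w by (simp add: c_def)
      finally have "y' \<in> Vs.span G" using G y'Y by blast
      hence "y' \<in> Vs.span (insert w G)" using Vs.span_mono[of G "insert w G"] by blast
      moreover have "vscale c w \<in> Vs.span (insert w G)" by (intro Vs.span_scale Vs.span_base) simp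
      ultimately have "y' + vscale c w \<in> Vs.span (insert w G)" by (rule Vs.span_add)
      moreover have "y' + vscale c w = y" by (simp add: y'_def plus_vadd vadd_def vdiff_def vscale_def)
      ultimately show "y \<in> Vs.span (insert w G)" by simp
    qed
    hence "fin_dim Y" unfolding fin_dim_span using G w Yl by (intro exI[of _ "insert w G"]) auto
    then show False using Y by simp
  qed
qed

lemma cutF:
  assumes "finite F" "F \<subseteq> l2" "lsub Y" "\<not> fin_dim Y"
  shows "lsub {y\<in>Y. \<forall>f\<in>F. l2inner f y = 0} \<and> \<not> fin_dim {y\<in>Y. \<forall>f\<in>F. l2inner f y = 0}"
  using assms(1,2)
proof (induction F rule: finite_induct)
  case empty then show ?case using assms by simp
next
  case (insert a F)
  define S where "S = {y\<in>Y. \<forall>f\<in>F. l2inner f y = 0}"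
  have S: "lsub S" "\<not> fin_dim S" using insert by (auto simp: S_def)
  have a: "a \<in> l2" using insert by auto
  have eq: "{y\<in>Y. \<forall>f\<in>insert a F. l2inner f y = 0} = {y\<in>S. l2inner a y = 0}"
    by (auto simp: S_def)
  show ?case unfolding eq using lsub_cut[OF S(1) a] cut_not_fin_dim[OF S a] by blast
qed

lemma nsq_scale: "x \<in> l2 \<Longrightarrow> nsq (vscale c x) = (cmod c)^2 * nsq x"
proof -
  assume x: "x \<in> l2"
  have "complex_of_real (nsq (vscale c x)) = c * cnj c * complex_of_real (nsq x)"
    using x by (simp add: inner_self[symmetric] inner_scale_left inner_scale_right)
  also have "\<dots> = complex_of_real ((cmod c)^2 * nsq x)"
    by (simp only: complex_norm_square[symmetric] of_real_mult)
  finally show ?thesis by (simp only: of_real_eq_iff)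
qed


declare Vs.scale_minus_left[simp del]
lemma exists_unit: assumes "lsub Y" "\<not> fin_dim Y" shows "\<exists>y\<in>Y. l2inner y y = 1"
proof -
  have "\<not> Y \<subseteq> {vzero}"
  proof
    assume "Y \<subseteq> {vzero}"
    hence "Y \<subseteq> Vs.span {}" by (simp add: zero_fun_def vzero_def)
    hence "fin_dim Y" unfolding fin_dim_span by blast
    thus False using assms by simp
  qed
  then obtain y where y: "y \<in> Y" "y \<noteq> vzero" by blast
  have yl: "y \<in> l2" using y assms by (auto simp: lsub_def)
  have pos: "nsq y > 0" using nsq_nonneg[OF yl] nsq_zero[OF yl] y by force
  define c where "c = complex_of_real (1 / sqrt (nsq y))"
  have "cmod c = 1 / sqrt (nsq y)" using pos unfolding c_def norm_of_real by simp
  hence "(cmod c)^2 = 1 / nsq y" using pos by (simp add: power_divide)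
  hence "nsq (vscale c y) = 1" using pos yl by (simp add: nsq_scale)
  moreover have "vscale c y \<in> Y" using y assms unfolding lsub_def by blast
  moreover have "vscale c y \<in> l2" using yl by simp
  ultimately have u1: "l2inner (vscale c y) (vscale c y) = 1" using inner_self[of "vscale c y"] by simp
  show ?thesis
  proof
    show "l2inner (vscale c y) (vscale c y) = 1" by (rule u1)
    show "vscale c y \<in> Y" by fact
  qed
qed


lemma nsq_diff: assumes "a \<in> l2" "b \<in> l2"
  shows "nsq (vdiff a b) = nsq a + nsq b - 2 * Re (l2inner a b)"
proof -
  have "nsq (vadd a (vscale (-1) b)) = nsq a + nsq b - 2 * Re (l2inner a b)"
    using assms by (simp add: nsq_add nsq_scale inner_scale_right del: Vs.scale_minus_left)
  thus ?thesis by (simp only: vdiff_eq)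
qed

definition ev :: "nat \<Rightarrow> vec" where "ev n = (\<lambda>k. if k = n then 1 else 0)"

lemma ev_l2[simp]: "ev n \<in> l2"
proof -
  have "(\<lambda>k. (cmod (ev n k))^2) = (\<lambda>k. if k = n then 1 else 0)" by (auto simp: ev_def fun_eq_iff)
  thus ?thesis by (simp add: l2_iff)
qed

lemma inner_ev: "l2inner (ev n) x = cnj (x n)"
proof -
  have "(\<lambda>k. ev n k * cnj (x k)) = (\<lambda>k. if k = n then cnj (x k) else 0)" by (auto simp: ev_def fun_eq_iff)
  moreover have "(\<lambda>k. if k = n then cnj (x k) else 0) sums cnj (x n)" by (rule sums_single)
  ultimately show ?thesis by (simp add: l2inner_def sums_iff)
qed

lemma good_exists:
  assumes Y: "lsub Y" "\<not> fin_dim Y" and eps: "\<epsilon> > 0"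
  shows "\<exists>u\<in>Y. l2inner u u = 1 \<and> (\<forall>x\<in>Y. l2inner u x = 0 \<longrightarrow> (cmod (x n))^2 \<le> \<epsilon> * (nsq x + 1))"
proof -
  have Yl: "Y \<subseteq> l2" and Y0: "vzero \<in> Y" using Y(1) by (auto simp: lsub_def)
  have Yadd: "\<And>x y. x \<in> Y \<Longrightarrow> y \<in> Y \<Longrightarrow> vadd x y \<in> Y"
    and Ysc: "\<And>c x. x \<in> Y \<Longrightarrow> vscale c x \<in> Y" using Y(1) unfolding lsub_def by blast+
  define e where "e = ev n"
  have el: "e \<in> l2" by (simp add: e_def)
  define D where "D = (\<lambda>y. nsq (vdiff e y)) ` Y"
  have Dne: "D \<noteq> {}" using Y0 by (auto simp: D_def)
  have Dbdd: "bdd_below D"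
    unfolding D_def bdd_below_def using Yl el by (intro exI[of _ 0]) (auto intro!: nsq_nonneg)
  have low: "Inf D \<le> nsq (vdiff e y)" if "y \<in> Y" for y
    using that Dbdd by (intro cInf_lower) (auto simp: D_def)
  have "Inf D < Inf D + \<epsilon>" using eps by simp
  hence "\<exists>z\<in>D. z < Inf D + \<epsilon>" using cInf_less_iff[OF Dne Dbdd] by blast
  then obtain z where z: "z \<in> D" "z < Inf D + \<epsilon>" by blast
  then obtain d where d: "d \<in> Y" "nsq (vdiff e d) < Inf D + \<epsilon>" unfolding D_def by blast
  have dl: "d \<in> l2" using d Yl by auto
  have main: "(cmod (x n))^2 \<le> \<epsilon> * (nsq x + 1)" if x: "x \<in> Y" "l2inner d x = 0" for x
  proof -
    have xl: "x \<in> l2" using x Yl by auto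
    define N where "N = nsq x"
    define a where "a = (cmod (x n))^2"
    define s where "s = 1 / (N + 1)"
    have N0: "N \<ge> 0" using nsq_nonneg[OF xl] by (simp add: N_def)
    have a0: "a \<ge> 0" by (simp add: a_def)
    have s0: "s > 0" "s * (N + 1) = 1" using N0 by (auto simp: s_def)
    define t where "t = complex_of_real s * cnj (x n)"
    define y where "y = vadd d (vscale t x)"
    have yY: "y \<in> Y" using d x by (simp add: y_def Yadd Ysc)
    have eq: "vdiff e y = vdiff (vdiff e d) (vscale t x)"
      by (simp add: y_def vdiff_def vadd_def vscale_def fun_eq_iff)
    have edl: "vdiff e d \<in> l2" using el dl by simp
    have txl: "vscale t x \<in> l2" using xl by simp
    have n1: "nsq (vscale t x) = s^2 * a * N"
      using xl s0 by (simp add: nsq_scale t_def norm_mult a_def N_def power_mult_distrib)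
    have "l2inner (vdiff e d) (vscale t x) = cnj t * (l2inner e x - l2inner d x)"
      using el dl xl by (simp add: inner_scale_right inner_diff_left)
    also have "\<dots> = cnj t * cnj (x n)" using x by (simp add: e_def inner_ev)
    also have "\<dots> = complex_of_real s * (x n * cnj (x n))"
      by (simp add: t_def mult.assoc)
    also have "\<dots> = complex_of_real (s * a)"
      unfolding a_def complex_norm_square[symmetric] by simp
    finally have n2: "Re (l2inner (vdiff e d) (vscale t x)) = s * a" by simp
    have "Inf D \<le> nsq (vdiff e y)" using low[OF yY] .
    also have "\<dots> = nsq (vdiff e d) + s^2 * a * N - 2 * (s * a)"
      using eq nsq_diff[OF edl txl] n1 n2 by simp
    finally have ineq: "2 * (s * a) - s^2 * a * N < \<epsilon>" using d(2) by simp
    have "s * N \<le> 1" using s0 N0 by (simp add: algebra_simps)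
    hence "(s * N) * (s * a) \<le> 1 * (s * a)" using s0 a0 by (intro mult_right_mono) auto
    hence "s^2 * a * N \<le> s * a" by (simp add: power2_eq_square algebra_simps)
    hence sa: "s * a < \<epsilon>" using ineq by simp
    have "a = (s * a) * (N + 1)" using s0 by (simp add: algebra_simps)
    also have "\<dots> \<le> \<epsilon> * (N + 1)" using sa N0 by (intro mult_right_mono) auto
    finally show ?thesis by (simp add: a_def N_def)
  qed
  show ?thesis
  proof (cases "d = vzero")
    case True
    obtain u where u: "u \<in> Y" "l2inner u u = 1" using exists_unit[OF Y] by blast
    show ?thesis using u main True by (intro bexI[of _ u]) auto
  next
    case False
    have pos: "nsq d > 0" using nsq_nonneg[OF dl] nsq_zero[OF dl] False by force
    define c where "c = complex_of_real (1 / sqrt (nsq d))"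
    have "cmod c = 1 / sqrt (nsq d)" using pos unfolding c_def norm_of_real by simp
    hence "(cmod c)^2 = 1 / nsq d" using pos by (simp add: power_divide)
    hence "nsq (vscale c d) = 1" using pos dl by (simp add: nsq_scale)
    moreover have ul: "vscale c d \<in> l2" using dl by simp
    ultimately have u1: "l2inner (vscale c d) (vscale c d) = 1" using inner_self[of "vscale c d"] by simp
    have cnz: "c \<noteq> 0" using pos by (simp add: c_def)
    have "l2inner d x = 0" if "x \<in> Y" "l2inner (vscale c d) x = 0" for x
      using that cnz dl Yl by (auto simp: inner_scale_left)
    hence "\<forall>x\<in>Y. l2inner (vscale c d) x = 0 \<longrightarrow> (cmod (x n))^2 \<le> \<epsilon> * (nsq x + 1)"
      using main by blast
    moreover have "vscale c d \<in> Y" using d Ysc by blast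
    ultimately show ?thesis using u1 by (intro bexI[where x="vscale c d"]) auto
  qed
qed


primrec blist :: "(vec list \<Rightarrow> nat \<Rightarrow> vec \<Rightarrow> bool) \<Rightarrow> nat \<Rightarrow> vec list" where
  "blist Q 0 = []"
| "blist Q (Suc k) = blist Q k @ [SOME w. Q (blist Q k) k w]"

lemma build_seq:
  fixes Q :: "vec list \<Rightarrow> nat \<Rightarrow> vec \<Rightarrow> bool"
  assumes ex: "\<And>ps k. \<exists>w. Q ps k w"
  shows "\<exists>s. \<forall>k. Q (map s [0..<k]) k (s k)"
proof -
  define s where "s k = (SOME w. Q (blist Q k) k w)" for k
  have bl: "blist Q k = map s [0..<k]" for k
    by (induction k) (simp_all add: s_def)
  have "Q (map s [0..<k]) k (s k)" for k :: nat
    unfolding bl[symmetric] s_def by (rule someI_ex[OF ex])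
  thus ?thesis by (rule exI[where x=s, OF allI])
qed

lemma orth_seq:
  fixes W :: "nat \<Rightarrow> vec set"
  assumes W: "\<And>k. lsub (W k)" "\<And>k. \<not> fin_dim (W k)"
  shows "\<exists>s. \<forall>k. s k \<in> W k \<and> l2inner (s k) (s k) = 1 \<and> (\<forall>j<k. l2inner (s j) (s k) = 0)"
proof -
  define Q :: "vec list \<Rightarrow> nat \<Rightarrow> vec \<Rightarrow> bool" where "Q ps k w \<longleftrightarrow> w \<in> W k \<and> l2inner w w = 1 \<and> (set ps \<subseteq> l2 \<longrightarrow> (\<forall>p\<in>set ps. l2inner p w = 0))"
    for ps k w
  have "\<exists>w. Q ps k w" for ps k
  proof (cases "set ps \<subseteq> l2")
    case True
    have c: "lsub {y\<in>W k. \<forall>f\<in>set ps. l2inner f y = 0} \<and> \<not> fin_dim {y\<in>W k. \<forall>f\<in>set ps. l2inner f y = 0}"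
      using cutF[OF finite_set True W(1) W(2)] .
    then obtain w where "w \<in> {y\<in>W k. \<forall>f\<in>set ps. l2inner f y = 0}" "l2inner w w = 1"
      using exists_unit by blast
    thus ?thesis unfolding Q_def by blast
  next
    case False
    obtain w where "w \<in> W k" "l2inner w w = 1" using exists_unit[OF W(1) W(2)] by blast
    thus ?thesis unfolding Q_def using False by blast
  qed
  then obtain s where s: "\<forall>k. Q (map s [0..<k]) k (s k)" using build_seq[of Q] by blast
  have sW: "s k \<in> W k" for k using s by (simp add: Q_def)
  have sl: "s k \<in> l2" for k using sW[of k] W(1)[of k] unfolding lsub_def by blast
  have sn: "l2inner (s k) (s k) = 1" for k using s unfolding Q_def by blast
  have so: "l2inner (s j) (s k) = 0" if jk: "j < k" for j k
  proof -
    have q: "Q (map s [0..<k]) k (s k)" using s by blast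
    have "set (map s [0..<k]) \<subseteq> l2" using sl by auto
    moreover have "s j \<in> set (map s [0..<k])" using jk by auto
    ultimately show ?thesis using q unfolding Q_def by blast
  qed
  show ?thesis using sW sn so by blast
qed

lemma orth_full:
  fixes s :: "nat \<Rightarrow> vec"
  assumes l: "\<And>k. s k \<in> l2" and nn: "\<And>k. l2inner (s k) (s k) = 1"
    and ort: "\<And>j k. j < k \<Longrightarrow> l2inner (s j) (s k) = 0"
  shows "l2inner (s j) (s k) = (if j = k then 1 else 0)"
proof (cases "j < k")
  case True thus ?thesis using ort[OF True] by auto
next
  case False
  show ?thesis
  proof (cases "j = k")
    case True thus ?thesis using nn by simp
  next
    case False2: False
    hence "k < j" using False by simp
    hence "l2inner (s k) (s j) = 0" by (rule ort)
    hence "l2inner (s j) (s k) = 0" using inner_commute[OF l[of k] l[of j]] by simp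
    thus ?thesis using False2 by simp
  qed
qed


lemma small_zero:
  fixes a C :: real
  assumes a: "a \<ge> 0" and C: "C \<ge> 0" and b: "\<And>m::nat. a \<le> (1 / (real m + 1)) * C"
  shows "a = 0"
proof (rule ccontr)
  assume "a \<noteq> 0" hence ap: "a > 0" using a by simp
  obtain m :: nat where m: "C / a < real m" using reals_Archimedean2 by blast
  have "C < real m * a" using m ap by (simp add: field_simps)
  also have "\<dots> < (real m + 1) * a" using ap by simp
  finally have "C / (real m + 1) < a" by (simp add: field_simps)
  thus False using b[of m] by simp
qed

lemma total_seq:
  assumes X: "lsub X" "\<not> fin_dim X"
  shows "\<exists>u::nat \<Rightarrow> vec. (\<forall>k. u k \<in> X \<and> l2inner (u k) (u k) = 1 \<and> (\<forall>j<k. l2inner (u j) (u k) = 0))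
             \<and> (\<forall>x\<in>X. (\<forall>k. l2inner (u k) x = 0) \<longrightarrow> x = vzero)"
proof -
  define Q :: "vec list \<Rightarrow> nat \<Rightarrow> vec \<Rightarrow> bool" where "Q ps k w \<longleftrightarrow> w \<in> X \<and> l2inner w w = 1 \<and>
     (set ps \<subseteq> l2 \<longrightarrow> (\<forall>p\<in>set ps. l2inner p w = 0) \<and>
        (\<forall>x\<in>{y\<in>X. \<forall>f\<in>set ps. l2inner f y = 0}. l2inner w x = 0 \<longrightarrow>
           (cmod (x (fst (prod_decode k))))^2 \<le> (1 / (real (snd (prod_decode k)) + 1)) * (nsq x + 1)))"
    for ps k w
  have "\<exists>w. Q ps k w" for ps k
  proof (cases "set ps \<subseteq> l2")
    case True
    define Y where "Y = {y\<in>X. \<forall>f\<in>set ps. l2inner f y = 0}"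
    have c: "lsub Y" "\<not> fin_dim Y" using cutF[OF finite_set True X(1) X(2)] by (auto simp: Y_def)
    have eps: "(1 / (real (snd (prod_decode k)) + 1)) > 0" by simp
    obtain w where w: "w \<in> Y" "l2inner w w = 1"
      "\<forall>x\<in>Y. l2inner w x = 0 \<longrightarrow> (cmod (x (fst (prod_decode k))))^2 \<le> (1 / (real (snd (prod_decode k)) + 1)) * (nsq x + 1)"
      using good_exists[OF c eps, of "fst (prod_decode k)"] by blast
    have "Q ps k w" unfolding Q_def using w True by (auto simp: Y_def)
    thus ?thesis by blast
  next
    case False
    obtain w where "w \<in> X" "l2inner w w = 1" using exists_unit[OF X(1) X(2)] by blast
    thus ?thesis unfolding Q_def using False by blast
  qed
  then obtain s where s: "\<forall>k. Q (map s [0..<k]) k (s k)" using build_seq[of Q] by blast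
  have sX: "s k \<in> X" for k using s unfolding Q_def by blast
  have Xl: "X \<subseteq> l2" using X(1) by (simp add: lsub_def)
  have sl: "s k \<in> l2" for k using sX Xl by blast
  have sn: "l2inner (s k) (s k) = 1" for k using s unfolding Q_def by blast
  have pre: "set (map s [0..<k]) \<subseteq> l2" for k using sl by auto
  have so: "l2inner (s j) (s k) = 0" if jk: "j < k" for j k
  proof -
    have q: "Q (map s [0..<k]) k (s k)" using s by blast
    moreover have "s j \<in> set (map s [0..<k])" using jk by auto
    ultimately show ?thesis using pre[of k] unfolding Q_def by blast
  qed
  have tot: "x = vzero" if x: "x \<in> X" "\<forall>k. l2inner (s k) x = 0" for x
  proof -
    have "x n = 0" for n
    proof -
      have bnd: "(cmod (x n))^2 \<le> (1 / (real m + 1)) * (nsq x + 1)" for m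
      proof -
        define k where "k = prod_encode (n, m)"
        have dk: "prod_decode k = (n, m)" by (simp add: k_def)
        have q: "Q (map s [0..<k]) k (s k)" using s by blast
        have "x \<in> {y\<in>X. \<forall>f\<in>set (map s [0..<k]). l2inner f y = 0}" using x by auto
        hence "(cmod (x (fst (prod_decode k))))^2 \<le> (1 / (real (snd (prod_decode k)) + 1)) * (nsq x + 1)"
          using q pre[of k] x(2) unfolding Q_def by blast
        thus ?thesis by (simp add: dk)
      qed
      have nn: "0 \<le> nsq x + 1" using nsq_nonneg[of x] x Xl by force
      have "(cmod (x n))^2 = 0" by (rule small_zero[OF _ nn bnd]) simp
      thus ?thesis by simp
    qed
    thus ?thesis by (simp add: vzero_def fun_eq_iff)
  qed
  have A1: "\<forall>k. s k \<in> X \<and> l2inner (s k) (s k) = 1 \<and> (\<forall>j<k. l2inner (s j) (s k) = 0)"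
    using sX sn so by blast
  have A2: "\<forall>x\<in>X. (\<forall>k. l2inner (s k) x = 0) \<longrightarrow> x = vzero" using tot by blast
  show ?thesis using A1 A2 by (intro exI[of _ s] conjI)
qed


lemma rot:
  fixes p r :: "nat \<Rightarrow> vec"
  assumes pl: "\<And>k. p k \<in> l2" and rl: "\<And>k. r k \<in> l2"
    and pp: "\<And>j k. l2inner (p j) (p k) = (if j = k then 1 else 0)"
    and rr: "\<And>j k. l2inner (r j) (r k) = (if j = k then 1 else 0)"
    and pr: "\<And>j k. l2inner (p j) (r k) = 0" and rp: "\<And>j k. l2inner (r j) (p k) = 0"
  shows "orth_compl (orth_compl (range (\<lambda>k. vadd (p k) (r k)))) \<in> Ginf"
    and "\<And>k. vdiff (vscale 2 (p k)) (vadd (p k) (r k)) \<in> orth_compl (range (\<lambda>k. vadd (p k) (r k)))"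
    and "orth_compl (orth_compl (range r)) \<in> Ginf"
    and "\<And>k. p k \<in> orth_compl (range r)"
proof -
  define W where "W = range (\<lambda>k. vadd (p k) (r k))"
  have Wl: "W \<subseteq> l2" using pl rl by (auto simp: W_def)
  have rgl: "range r \<subseteq> l2" using rl by auto
  define g where "g k = vadd (p k) (r k)" for k
  define h where "h k = vdiff (p k) (r k)" for k
  have gl: "g k \<in> l2" "h k \<in> l2" for k using pl rl by (auto simp: g_def h_def)
  have gg: "l2inner (g j) (g k) = (if j = k then 2 else 0)" for j k
    using pl rl pp rr pr rp by (simp add: g_def inner_add_left inner_add_right)
  have hh: "l2inner (h j) (h k) = (if j = k then 2 else 0)" for j k
    using pl rl pp rr pr rp by (simp add: h_def inner_diff_left inner_diff_right)
  have gh: "l2inner (g j) (h k) = 0" for j k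
    using pl rl pp rr pr rp by (simp add: g_def h_def inner_add_left inner_diff_right)
  have hW: "h k \<in> orth_compl W" for k
    using gh gl by (auto simp: orth_compl_def W_def g_def[symmetric])
  have eqh: "vdiff (vscale 2 (p k)) (vadd (p k) (r k)) = h k" for k
    by (simp add: h_def vdiff_def vadd_def vscale_def fun_eq_iff)
  show "vdiff (vscale 2 (p k)) (vadd (p k) (r k)) \<in> orth_compl (range (\<lambda>k. vadd (p k) (r k)))" for k
    using hW eqh by (simp add: W_def)
  have gnz: "g k \<noteq> vzero" "h k \<noteq> vzero" for k
    using gg[of k k] hh[of k k] by auto
  have "closed_subspace (orth_compl (orth_compl W))" by (rule closed_orth_compl[OF orth_compl_l2])
  moreover have "\<not> fin_dim (orth_compl (orth_compl W))"
  proof (rule orth_family_not_fin_dim[of g])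
    show "\<forall>k. g k \<in> orth_compl (orth_compl W)" using sub_NN[OF Wl] by (auto simp: W_def g_def)
  qed (use gl gg gnz in auto)
  moreover have "\<not> fin_dim (orth_compl (orth_compl (orth_compl W)))"
    unfolding NNN[OF Wl]
    by (rule orth_family_not_fin_dim[of h]) (use gl hh gnz hW in auto)
  ultimately show "orth_compl (orth_compl (range (\<lambda>k. vadd (p k) (r k)))) \<in> Ginf"
    by (simp add: Ginf_def W_def)
  show pr2: "p k \<in> orth_compl (range r)" for k
    using rp pl by (auto simp: orth_compl_def)
  have "closed_subspace (orth_compl (orth_compl (range r)))" by (rule closed_orth_compl[OF orth_compl_l2])
  moreover have "\<not> fin_dim (orth_compl (orth_compl (range r)))"
  proof (rule orth_family_not_fin_dim[of r])
    show "\<forall>k. r k \<in> orth_compl (orth_compl (range r))" using sub_NN[OF rgl] by auto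
    have "l2inner (r k) (r k) \<noteq> 0" for k using rr by simp
    thus "\<forall>k. r k \<noteq> vzero" by (metis inner_zero_left)
  qed (use rl rr in auto)
  moreover have "\<not> fin_dim (orth_compl (orth_compl (orth_compl (range r))))"
    unfolding NNN[OF rgl]
  proof (rule orth_family_not_fin_dim[of p])
    have "l2inner (p k) (p k) \<noteq> 0" for k using pp by simp
    thus "\<forall>k. p k \<noteq> vzero" by (metis inner_zero_left)
  qed (use pl pp pr2 in auto)
  ultimately show "orth_compl (orth_compl (range r)) \<in> Ginf" by (simp add: Ginf_def)
qed


theorem proposition1:
  fixes f :: "vec set \<Rightarrow> vec set"
    and L :: "vec \<Rightarrow> vec"
    and Oc :: "vec set \<Rightarrow> vec set"
  assumes f_maps: "\<forall>X\<in>Ginf. f X \<in> Ginf"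
    and f_pairs: "sends_pairs_to_equiv f"
    and L_iso: "lin_isometry L \<or> conj_lin_isometry L"
    and O_sub: "\<forall>X\<in>Ginf. closed_subspace (Oc X) \<and> Oc X \<subseteq> orth_compl (L ` l2)"
    and f_decomp: "\<forall>X\<in>Ginf. f X = set_sum (L ` X) (Oc X)"
    and O_zero: "X0 \<in> Ginf" "Oc X0 = {vzero}"
  shows "\<forall>X\<in>Ginf. Oc X = {vzero}"
proof
  fix X assume X: "X \<in> Ginf"
  have iL: "isoL L" using L_iso lin_isoL conj_isoL by blast
  note RA = ruleA[OF f_pairs iL O_sub f_decomp]
  have csX: "closed_subspace X" and nfX: "\<not> fin_dim X" and nfNX: "\<not> fin_dim (orth_compl X)"
    using X by (auto simp: Ginf_def)
  have cs0: "closed_subspace X0" and nf0: "\<not> fin_dim X0" using O_zero by (auto simp: Ginf_def)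
  have Xl: "X \<subseteq> l2" using csX cs_l2 by auto
  have X0l: "X0 \<subseteq> l2" using cs0 cs_l2 by auto
  have lsNX: "lsub (orth_compl X)" using closed_orth_compl[OF Xl] cs_lsub by blast
  obtain u :: "nat \<Rightarrow> vec" where u: "\<forall>k. u k \<in> X \<and> l2inner (u k) (u k) = 1 \<and> (\<forall>j<k. l2inner (u j) (u k) = 0)"
    and utot: "\<forall>x\<in>X. (\<forall>k. l2inner (u k) x = 0) \<longrightarrow> x = vzero"
    using total_seq[OF cs_lsub[OF csX] nfX] by blast
  define Wk :: "nat \<Rightarrow> vec set" where "Wk k = (if even k then X0 else orth_compl X)" for k
  have "lsub (Wk k)" "\<not> fin_dim (Wk k)" for k
    using cs_lsub[OF cs0] nf0 lsNX nfNX by (auto simp: Wk_def)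
  then obtain s where s: "\<forall>k. s k \<in> Wk k \<and> l2inner (s k) (s k) = 1 \<and> (\<forall>j<k. l2inner (s j) (s k) = 0)"
    using orth_seq[of Wk] by blast
  have sl: "s k \<in> l2" for k using s X0l orth_compl_l2[of X] by (auto simp: Wk_def split: if_splits)
  have ss: "l2inner (s j) (s k) = (if j = k then 1 else 0)" for j k
    by (rule orth_full) (use sl s in auto)
  have ul: "u k \<in> l2" for k using u Xl by auto
  have uu: "l2inner (u j) (u k) = (if j = k then 1 else 0)" for j k
    by (rule orth_full) (use ul u in auto)
  define a where "a k = s (2 * k)" for k
  define q where "q k = s (2 * k + 1)" for k
  have al: "a k \<in> l2" and ql: "q k \<in> l2" for k using sl by (auto simp: a_def q_def)
  have aX0: "a k \<in> X0" for k using s[rule_format, of "2*k"] by (simp add: a_def Wk_def)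
  have qNX: "q k \<in> orth_compl X" for k using s[rule_format, of "2*k+1"] by (simp add: q_def Wk_def)
  have aa: "l2inner (a j) (a k) = (if j = k then 1 else 0)" for j k using ss by (simp add: a_def)
  have qq: "l2inner (q j) (q k) = (if j = k then 1 else 0)" for j k using ss by (simp add: q_def)
  have aq: "l2inner (a j) (q k) = 0" for j k using ss[of "2*j" "2*k+1"] by (simp add: a_def q_def) presburger
  have qa: "l2inner (q j) (a k) = 0" for j k using ss[of "2*j+1" "2*k"] by (simp add: a_def q_def) presburger
  have uq: "l2inner (u j) (q k) = 0" for j k using qNX u by (auto simp: orth_compl_def)
  have qu: "l2inner (q j) (u k) = 0" for j k using uq[of k j] inner_commute[OF ul[of k] ql[of j]] by simp
  note R1 = rot[OF al ql aa qq aq qa]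
  note R2 = rot[OF ql ul qq uu qu uq]
  define W1 where "W1 = range (\<lambda>k. vadd (a k) (q k))"
  define W2 where "W2 = range q"
  define W3 where "W3 = range (\<lambda>k. vadd (q k) (u k))"
  have W1l: "W1 \<subseteq> l2" and W2l: "W2 \<subseteq> l2" and W3l: "W3 \<subseteq> l2"
    using al ql ul by (auto simp: W1_def W2_def W3_def)
  define A1 where "A1 = orth_compl (orth_compl W1)"
  define A2 where "A2 = orth_compl (orth_compl W2)"
  define A3 where "A3 = orth_compl (orth_compl W3)"
  have A1G: "A1 \<in> Ginf" using R1(1) by (simp add: A1_def W1_def)
  have A2G: "A2 \<in> Ginf" using R1(3) by (simp add: A2_def W2_def)
  have A3G: "A3 \<in> Ginf" using R2(1) by (simp add: A3_def W3_def)
  have "A1 \<inter> orth_compl X0 \<subseteq> {vzero}" unfolding A1_def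
  proof (rule bprime[OF X0l W1l])
    show "\<forall>w\<in>W1. \<exists>y\<in>X0. vdiff y w \<in> orth_compl W1"
    proof
      fix w assume "w \<in> W1"
      then obtain k where k: "w = vadd (a k) (q k)" by (auto simp: W1_def)
      have "vscale 2 (a k) \<in> X0" using aX0 cs0 by (simp add: closed_subspace_def)
      moreover have "vdiff (vscale 2 (a k)) w \<in> orth_compl W1" using R1(2)[of k] k by (simp add: W1_def)
      ultimately show "\<exists>y\<in>X0. vdiff y w \<in> orth_compl W1" by blast
    qed
  qed
  hence O1: "Oc A1 = {vzero}" using RA[OF O_zero A1G] by blast
  have A1l: "A1 \<subseteq> l2" using orth_compl_l2 by (simp add: A1_def)
  have "A2 \<inter> orth_compl A1 \<subseteq> {vzero}" unfolding A2_def
  proof (rule bprime[OF A1l W2l])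
    show "\<forall>w\<in>W2. \<exists>y\<in>A1. vdiff y w \<in> orth_compl W2"
    proof
      fix w assume "w \<in> W2"
      then obtain k where k: "w = q k" by (auto simp: W2_def)
      have "vadd (a k) (q k) \<in> A1" using sub_NN[OF W1l] by (auto simp: A1_def W1_def)
      moreover have "vdiff (vadd (a k) (q k)) w = a k" using k by (simp add: vdiff_def vadd_def fun_eq_iff)
      moreover have "a k \<in> orth_compl W2" using R1(4)[of k] by (simp add: W2_def)
      ultimately show "\<exists>y\<in>A1. vdiff y w \<in> orth_compl W2" by metis
    qed
  qed
  hence O2: "Oc A2 = {vzero}" using RA[OF A1G O1 A2G] by blast
  have A2l: "A2 \<subseteq> l2" using orth_compl_l2 by (simp add: A2_def)
  have csA2: "closed_subspace A2" unfolding A2_def by (rule closed_orth_compl[OF orth_compl_l2])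
  have "A3 \<inter> orth_compl A2 \<subseteq> {vzero}" unfolding A3_def
  proof (rule bprime[OF A2l W3l])
    show "\<forall>w\<in>W3. \<exists>y\<in>A2. vdiff y w \<in> orth_compl W3"
    proof
      fix w assume "w \<in> W3"
      then obtain k where k: "w = vadd (q k) (u k)" by (auto simp: W3_def)
      have "q k \<in> A2" using sub_NN[OF W2l] by (auto simp: A2_def W2_def)
      hence "vscale 2 (q k) \<in> A2" using csA2 by (simp add: closed_subspace_def)
      moreover have "vdiff (vscale 2 (q k)) w \<in> orth_compl W3" using R2(2)[of k] k by (simp add: W3_def)
      ultimately show "\<exists>y\<in>A2. vdiff y w \<in> orth_compl W3" by blast
    qed
  qed
  hence O3: "Oc A3 = {vzero}" using RA[OF A2G O2 A3G] by blast
  have "X \<inter> orth_compl A3 \<subseteq> {vzero}"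
  proof
    fix x assume x: "x \<in> X \<inter> orth_compl A3"
    hence xW: "x \<in> orth_compl W3" using NNN[OF W3l] by (simp add: A3_def)
    have xl: "x \<in> l2" using x Xl by auto
    have "l2inner (u k) x = 0" for k
    proof -
      have "l2inner (vadd (q k) (u k)) x = 0" using xW by (auto simp: orth_compl_def W3_def)
      hence "l2inner (q k) x + l2inner (u k) x = 0" using ql ul xl by (simp add: inner_add_left)
      moreover have "l2inner x (q k) = 0" using qNX x by (auto simp: orth_compl_def)
      hence "l2inner (q k) x = 0" using inner_commute[OF xl ql, of k] by simp
      ultimately show ?thesis by simp
    qed
    thus "x \<in> {vzero}" using utot x by auto
  qed
  thus "Oc X = {vzero}" using RA[OF A3G O3 X] by blast
qed

end
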